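(* Let $A \in \mathbb{R}^{n \times r}$ and $B \in \mathbb{R}^{r \times n}$ be matrices of rank $n$. The following are equivalent: (i) $\sigma(\ker(A)) \cap \sigma(\mathrm{im}(B)) = \{0\}$; (ii) for all $J\subseteq [r]$ of cardinality $n$, the product $\det(A_{[n],J})\det(B_{J,[n]})$ either is zero or has the same sign as all other nonzero such products, and at least one such product is nonzero.
   Context: $[n]=\{1,\dots,n\}$; $A_{[n],J}$ is the submatrix of $A$ with columns in $J$, $B_{J,[n]}$ the submatrix of $B$ with rows in $J$. $\sigma$ is the componentwise sign vector in $\{-,0,+\}^r$, $\sigma(T)=\{\sigma(x)\mid x\in T\}$, and $0$ denotes the zero sign vector. *)

theory Defs
  imports "Jordan_Normal_Form.DL_Rank" "Jordan_Normal_Form.DL_Submatrix"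
    "Jordan_Normal_Form.Matrix_Kernel"
begin

definition sign_vec :: "real vec \<Rightarrow> real vec" where
  "sign_vec x = map_vec sgn x"

definition mat_image :: "real mat \<Rightarrow> real vec set" where
  "mat_image B = {B *\<^sub>v y | y. y \<in> carrier_vec (dim_col B)}"

(* product det(A_{[n],J}) * det(B_{J,[n]}) ; indices are 0-based *)
definition minor_prod :: "nat \<Rightarrow> real mat \<Rightarrow> real mat \<Rightarrow> nat set \<Rightarrow> real" where
  "minor_prod n A B J = det (submatrix A {0..<n} J) * det (submatrix B J {0..<n})"

end

theory Submission
  imports Defs
begin
lemma pick_lt_id: "i < n \<Longrightarrow> pick {0..<n} i = i"
proof -
  assume "i < n"
  have "card {a\<in>{0..<n}. a < i} = i"
  proof -
    have "{a\<in>{0..<n}. a < i} = {0..<i}" using \<open>i<n\<close> by auto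
    thus ?thesis by simp
  qed
  thus ?thesis using pick_card_in_set[of i "{0..<n}"] \<open>i<n\<close> by simp
qed
lemma pick_image: assumes "finite J" shows "pick J ` {0..<card J} = J"
proof
  show "pick J ` {0..<card J} \<subseteq> J" using pick_in_set by auto
  show "J \<subseteq> pick J ` {0..<card J}"
  proof
    fix j assume j: "j \<in> J"
    have "{a\<in>J. a < j} \<subset> J" using j by auto
    hence "card {a\<in>J. a < j} < card J" using assms psubset_card_mono by blast
    hence "card {a\<in>J. a < j} \<in> {0..<card J}" by simp
    moreover have "pick J (card {a\<in>J. a < j}) = j" using pick_card_in_set[OF j] .
    ultimately show "j \<in> pick J ` {0..<card J}" by (metis image_eqI)
  qed
qed
lemma pick_inj: "inj_on (pick J) {0..<card J}"
proof (rule inj_onI, rule ccontr)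
  fix x y assume xy: "x \<in> {0..<card J}" "y \<in> {0..<card J}" "pick J x = pick J y" "x \<noteq> y"
  show False
  proof (cases "x < y")
    case True thus False using pick_mono[of y J x] xy by auto
  next
    case False hence "y < x" using xy by auto
    thus False using pick_mono[of x J y] xy by auto
  qed
qed

lemma submatrix_carrier_J:
  assumes A: "A \<in> carrier_mat n r" and J: "J \<subseteq> {0..<r}" "card J = n"
  shows "submatrix A {0..<n} J \<in> carrier_mat n n"
proof -
  have "{i. i < n \<and> i \<in> {0..<n}} = {0..<n}" by auto
  moreover have "{j. j < r \<and> j \<in> J} = J" using J by auto
  ultimately show ?thesis using A J unfolding carrier_mat_def by (simp add: dim_submatrix)
qed

lemma submatrix_index_J:
  assumes A: "A \<in> carrier_mat n r" and J: "J \<subseteq> {0..<r}" "card J = n"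
    and i: "i < n" and j: "j < n"
  shows "submatrix A {0..<n} J $$ (i,j) = A $$ (i, pick J j)"
proof -
  have 1: "{i. i < n \<and> i \<in> {0..<n}} = {0..<n}" by auto
  have 2: "{j. j < r \<and> j \<in> J} = J" using J by auto
  show ?thesis using A J i j by (subst submatrix_index) (auto simp: 1 2 pick_lt_id)
qed

lemma submatrix_index_J2:
  assumes B: "B \<in> carrier_mat r n" and J: "J \<subseteq> {0..<r}" "card J = n"
    and i: "i < n" and j: "j < n"
  shows "submatrix B J {0..<n} $$ (i,j) = B $$ (pick J i, j)"
proof -
  have 1: "{i. i < n \<and> i \<in> {0..<n}} = {0..<n}" by auto
  have 2: "{j. j < r \<and> j \<in> J} = J" using J by auto
  show ?thesis using B J i j by (subst submatrix_index) (auto simp: 1 2 pick_lt_id)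
qed

lemma submatrix_carrier_J2:
  assumes B: "B \<in> carrier_mat r n" and J: "J \<subseteq> {0..<r}" "card J = n"
  shows "submatrix B J {0..<n} \<in> carrier_mat n n"
proof -
  have "{i. i < n \<and> i \<in> {0..<n}} = {0..<n}" by auto
  moreover have "{j. j < r \<and> j \<in> J} = J" using J by auto
  ultimately show ?thesis using B J unfolding carrier_mat_def by (simp add: dim_submatrix)
qed

lemma cauchy_binet:
  fixes A B :: "'a :: comm_ring_1 mat"
  assumes A: "A \<in> carrier_mat n r" and B: "B \<in> carrier_mat r n"
  shows "det (A * B) = (\<Sum>J\<in>{J. J \<subseteq> {0..<r} \<and> card J = n}.
            det (submatrix A {0..<n} J) * det (submatrix B J {0..<n}))"
proof -
  let ?U = "{0 ..< n}"
  let ?R = "{0 ..< r}"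
  let ?F = "{f. (\<forall>i\<in> ?U. f i \<in> ?R) \<and> (\<forall>i. i \<notin> ?U \<longrightarrow> f i = i)}"
  let ?I = "{f \<in> ?F. inj_on f ?U}"
  let ?JJ = "{J. J \<subseteq> {0..<r} \<and> card J = n}"
  let ?PU = "{p. p permutes ?U}"
  let ?S = "Sigma ?JJ (\<lambda>_. ?PU)"
  let ?g = "\<lambda> f. det (mat\<^sub>r n n (\<lambda> i. A $$ (i, f i) \<cdot>\<^sub>v row B (f i)))"
  let ?rb = "\<lambda> f. det (mat\<^sub>r n n (\<lambda> i. row B (f i)))"
  define h where "h = (\<lambda>(J,p) i. if i < n then pick J (p i) else (i::nat))"
  have fF: "finite ?F" by (rule finite_bounded_functions, auto)
  have g_eq: "?g f = (\<Prod>i\<in>?U. A $$ (i, f i)) * ?rb f" if f: "f \<in> ?F" for f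
    by (rule det_rows_mul, insert f B, auto)
  have "det (A * B) = sum ?g ?F"
    unfolding mat_mul_finsum_alt[OF A B]
    by (rule det_linear_rows_sum, insert A B, auto)
  also have "\<dots> = sum ?g ?I"
  proof (rule sum.mono_neutral_right[OF fF])
    show "?I \<subseteq> ?F" by auto
    show "\<forall>f\<in>?F - ?I. ?g f = 0"
    proof
      fix f assume f: "f \<in> ?F - ?I"
      then obtain i j where ij: "f i = f j" "i \<noteq> j" "i < n" "j < n"
        unfolding inj_on_def by auto
      have "?rb f = 0"
        by (rule det_identical_rows[OF _ ij(2-4)], insert B ij, auto)
      thus "?g f = 0" using g_eq f by auto
    qed
  qed
  also have "\<dots> = sum (\<lambda>x. ?g (h x)) ?S"
  proof (rule sum.reindex_bij_betw[symmetric], unfold bij_betw_def, intro conjI)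
    have himg: "h (J,p) ` ?U = J" if "(J,p) \<in> ?S" for J p
    proof -
      from that have p: "p permutes ?U" and J: "J \<subseteq> ?R" "card J = n" by auto
      have fJ: "finite J" using J finite_subset by blast
      have "h (J,p) ` ?U = pick J ` (p ` ?U)" unfolding h_def by force
      also have "p ` ?U = ?U" using permutes_image[OF p] .
      also have "pick J ` ?U = J" using pick_image[OF fJ] J by simp
      finally show ?thesis .
    qed
    show "inj_on h ?S"
    proof (rule inj_onI)
      fix x y assume x: "x \<in> ?S" and y: "y \<in> ?S" and hxy: "h x = h y"
      obtain J p where xx: "x = (J,p)" by (cases x)
      obtain K q where yy: "y = (K,q)" by (cases y)
      have JK: "J = K" using himg[of J p] himg[of K q] x y hxy xx yy by metis
      from x y xx yy have p: "p permutes ?U" and q: "q permutes ?U" and J: "card J = n" by auto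
      have "p i = q i" for i
      proof (cases "i < n")
        case True
        have "pick J (p i) = pick J (q i)" using fun_cong[OF hxy, of i] True xx yy JK
          unfolding h_def by auto
        moreover have "p i \<in> {0..<card J}" "q i \<in> {0..<card J}"
          using permutes_in_image[OF p] permutes_in_image[OF q] True J by auto
        ultimately show ?thesis using pick_inj[of J] unfolding inj_on_def by blast
      next
        case False
        then show ?thesis using permutes_not_in[OF p] permutes_not_in[OF q] by auto
      qed
      thus "x = y" using xx yy JK by auto
    qed
    show "h ` ?S = ?I"
    proof
      show "h ` ?S \<subseteq> ?I"
      proof
        fix f assume "f \<in> h ` ?S"
        then obtain J p where Jp: "(J,p) \<in> ?S" and f: "f = h (J,p)" by auto
        from Jp have p: "p permutes ?U" and J: "J \<subseteq> ?R" "card J = n" by auto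
        have pi: "i < n \<Longrightarrow> p i < n" for i using permutes_in_image[OF p] by auto
        have "f \<in> ?F" unfolding f h_def using J pi pick_in_set[of _ J] by fastforce
        moreover have "inj_on f ?U"
        proof (rule inj_onI)
          fix i j assume i: "i \<in> ?U" and j: "j \<in> ?U" and fij: "f i = f j"
          hence "pick J (p i) = pick J (p j)" unfolding f h_def by auto
          hence "p i = p j" using pick_inj[of J] pi i j J unfolding inj_on_def by auto
          thus "i = j" using permutes_inj[OF p] unfolding inj_def by auto
        qed
        ultimately show "f \<in> ?I" by auto
      qed
      show "?I \<subseteq> h ` ?S"
      proof
        fix f assume f: "f \<in> ?I"
        define J where "J = f ` ?U"
        have J: "J \<subseteq> ?R" "card J = n" using f unfolding J_def by (auto simp: card_image)
        have fJ: "finite J" unfolding J_def by auto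
        have pJ: "pick J ` ?U = J" using pick_image[OF fJ] J by simp
        define p where "p = (\<lambda>i. if i < n then inv_into ?U (pick J) (f i) else i)"
        have fiJ: "i < n \<Longrightarrow> f i \<in> pick J ` ?U" for i by (subst pJ) (auto simp: J_def)
        have pU: "i < n \<Longrightarrow> p i \<in> ?U" for i unfolding p_def using inv_into_into[OF fiJ] by auto
        have pp: "i < n \<Longrightarrow> pick J (p i) = f i" for i unfolding p_def using f_inv_into_f[OF fiJ] by auto
        have "p permutes ?U"
        proof (rule inj_on_nat_permutes)
          show "inj_on p ?U"
          proof (rule inj_onI)
            fix i j assume i: "i \<in> ?U" and j: "j \<in> ?U" and "p i = p j"
            hence "f i = f j" using pp by (metis atLeastLessThan_iff)
            thus "i = j" using f i j unfolding inj_on_def by auto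
          qed
        qed (use pU p_def in auto)
        hence "(J,p) \<in> ?S" using J by auto
        moreover have "f = h (J,p)" unfolding h_def using pp f by (auto intro!: ext)
        ultimately show "f \<in> h ` ?S" by blast
      qed
    qed
  qed
  also have "\<dots> = (\<Sum>J\<in>?JJ. \<Sum>p\<in>?PU. ?g (h (J,p)))"
  proof -
    have fJJ: "finite ?JJ" by (rule finite_subset[of _ "Pow ?R"]) auto
    have fP: "finite ?PU" by (rule finite_permutations) auto
    have "(\<Sum>J\<in>?JJ. \<Sum>p\<in>?PU. ?g (h (J,p))) = (\<Sum>(J,p)\<in>?S. ?g (h (J,p)))"
      using sum.Sigma[OF fJJ, of "\<lambda>_. ?PU" "\<lambda>J p. ?g (h (J,p))"] fP by auto
    then show ?thesis by (simp add: case_prod_unfold)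
  qed
  also have "\<dots> = (\<Sum>J\<in>?JJ. det (submatrix A {0..<n} J) * det (submatrix B J {0..<n}))"
  proof (rule sum.cong[OF refl])
    fix J assume J: "J \<in> ?JJ"
    let ?AJ = "submatrix A {0..<n} J"
    let ?BJ = "submatrix B J {0..<n}"
    have AJ: "?AJ \<in> carrier_mat n n" using submatrix_carrier_J[OF A] J by auto
    have BJ: "?BJ \<in> carrier_mat n n" using submatrix_carrier_J2[OF B] J by auto
    have "?g (h (J,p)) = signof p * (\<Prod>i = 0..<n. ?AJ $$ (i, p i)) * det ?BJ" if p: "p permutes ?U" for p
    proof -
      have pi: "i < n \<Longrightarrow> p i < n" for i using permutes_in_image[OF p] by auto
      have hF: "h (J,p) \<in> ?F" unfolding h_def using J pi pick_in_set[of _ J] by fastforce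
      have pr: "i < n \<Longrightarrow> pick J (p i) < r" for i
        using pick_in_set[of "p i" J] pi[of i] J by auto
      have "?rb (h (J,p)) = det (mat n n (\<lambda> (i,j). ?BJ $$ (p i, j)))"
        by (rule arg_cong[of _ _ det], rule eq_matI, insert B J pi pr,
            auto simp: h_def submatrix_index_J2)
      also have "\<dots> = signof p * det ?BJ" by (rule det_permute_rows[OF BJ p])
      finally have 1: "?rb (h (J,p)) = signof p * det ?BJ" .
      have 2: "(\<Prod>i\<in>?U. A $$ (i, h (J,p) i)) = (\<Prod>i = 0..<n. ?AJ $$ (i, p i))"
        by (rule prod.cong[OF refl], insert A J pi, auto simp: h_def submatrix_index_J)
      show ?thesis unfolding g_eq[OF hF] 1 2 by (simp add: ac_simps)
    qed
    hence "(\<Sum>p\<in>?PU. ?g (h (J,p))) = (\<Sum>p\<in>?PU. signof p * (\<Prod>i = 0..<n. ?AJ $$ (i, p i)) * det ?BJ)"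
      by (intro sum.cong) auto
    also have "\<dots> = det ?AJ * det ?BJ"
      unfolding det_def'[OF AJ] sum_distrib_right ..
    finally show "(\<Sum>p\<in>?PU. ?g (h (J,p))) = det ?AJ * det ?BJ" .
  qed
  finally show ?thesis .
qed


definition scl :: "real mat \<Rightarrow> (nat \<Rightarrow> real) \<Rightarrow> real mat" where
  "scl A d = mat (dim_row A) (dim_col A) (\<lambda>(i,j). A $$ (i,j) * d j)"

lemma scl_carrier: "A \<in> carrier_mat n r \<Longrightarrow> scl A d \<in> carrier_mat n r"
  unfolding scl_def carrier_mat_def by auto

lemma scl_mult_vec:
  assumes A: "A \<in> carrier_mat n r" and v: "v \<in> carrier_vec r"
  shows "scl A d *\<^sub>v v = A *\<^sub>v vec r (\<lambda>j. d j * v $ j)"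
  by (rule eq_vecI, insert A v, auto simp: scl_def scalar_prod_def ac_simps intro!: sum.cong)

lemma det_sub_scl:
  assumes A: "A \<in> carrier_mat n r" and J: "J \<subseteq> {0..<r}" "card J = n"
  shows "det (submatrix (scl A d) {0..<n} J) = det (submatrix A {0..<n} J) * (\<Prod>j\<in>J. d j)"
proof -
  let ?U = "{0..<n}"
  let ?SA = "submatrix (scl A d) {0..<n} J"
  let ?AJ = "submatrix A {0..<n} J"
  have SA: "?SA \<in> carrier_mat n n" using submatrix_carrier_J[OF scl_carrier[OF A] J] .
  have AJ: "?AJ \<in> carrier_mat n n" using submatrix_carrier_J[OF A J] .
  have fJ: "finite J" using J finite_subset by blast
  have dJ: "(\<Prod>i\<in>?U. d (pick J i)) = (\<Prod>j\<in>J. d j)"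
  proof -
    have "(\<Prod>j\<in>J. d j) = (\<Prod>j\<in>pick J ` ?U. d j)" using pick_image[OF fJ] J by simp
    also have "\<dots> = (\<Prod>i\<in>?U. d (pick J i))" using prod.reindex[OF pick_inj[of J]] J by simp
    finally show ?thesis by simp
  qed
  have "signof p * (\<Prod>i = 0..<n. ?SA $$ (i, p i)) =
        signof p * (\<Prod>i = 0..<n. ?AJ $$ (i, p i)) * (\<Prod>j\<in>J. d j)" if p: "p permutes ?U" for p
  proof -
    have pi: "i < n \<Longrightarrow> p i < n" for i using permutes_in_image[OF p] by auto
    have pr: "i < n \<Longrightarrow> pick J (p i) < r" for i
      using pick_in_set[of "p i" J] pi[of i] J by auto
    have "(\<Prod>i = 0..<n. ?SA $$ (i, p i)) = (\<Prod>i = 0..<n. ?AJ $$ (i, p i) * d (pick J (p i)))"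
    proof (rule prod.cong[OF refl])
      fix i assume "i \<in> {0..<n}"
      hence i: "i < n" by auto
      have "?SA $$ (i, p i) = scl A d $$ (i, pick J (p i))"
        using submatrix_index_J[OF scl_carrier[OF A] J i pi[OF i]] .
      also have "\<dots> = A $$ (i, pick J (p i)) * d (pick J (p i))"
        using A i pr[OF i] unfolding scl_def by auto
      also have "A $$ (i, pick J (p i)) = ?AJ $$ (i, p i)"
        using submatrix_index_J[OF A J i pi[OF i]] by simp
      finally show "?SA $$ (i, p i) = ?AJ $$ (i, p i) * d (pick J (p i))" .
    qed
    also have "\<dots> = (\<Prod>i = 0..<n. ?AJ $$ (i, p i)) * (\<Prod>i = 0..<n. d (pick J (p i)))"
      by (rule prod.distrib)
    also have "(\<Prod>i = 0..<n. d (pick J (p i))) = (\<Prod>i\<in>?U. d (pick J i))"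
      using prod.permute[OF p, of "\<lambda>i. d (pick J i)"] by (simp add: o_def)
    finally show ?thesis unfolding dJ by simp
  qed
  then show ?thesis unfolding det_def'[OF SA] det_def'[OF AJ] sum_distrib_right
    by (intro sum.cong) auto
qed

lemma P_formula:
  assumes A: "A \<in> carrier_mat n r" and B: "B \<in> carrier_mat r n"
  shows "det (scl A d * B) = (\<Sum>J\<in>{J. J \<subseteq> {0..<r} \<and> card J = n}. minor_prod n A B J * (\<Prod>j\<in>J. d j))"
  unfolding cauchy_binet[OF scl_carrier[OF A] B] minor_prod_def
  by (rule sum.cong[OF refl], auto simp: det_sub_scl[OF A])


lemma sgn_close: fixes x c :: real assumes "\<bar>x - c\<bar> < \<bar>c\<bar>" shows "sgn x = sgn c"
  using assms by (auto simp: sgn_if abs_if split: if_splits)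

lemma prod_le_t:
  fixes t :: real
  assumes t: "0 \<le> t" "t \<le> 1" and fJ: "finite J" and fJ0: "finite J0"
    and card: "card J = card J0" and ne: "J \<noteq> J0"
  shows "\<bar>\<Prod>j\<in>J. (if j \<in> J0 then 1 else t)\<bar> \<le> t"
proof -
  have "\<not> J \<subseteq> J0" using card_subset_eq[OF fJ0 _ card] ne by auto
  then obtain j where j: "j \<in> J" "j \<notin> J0" by auto
  let ?f = "\<lambda>j. (if j \<in> J0 then 1 else t)"
  have "(\<Prod>j\<in>J. ?f j) = ?f j * (\<Prod>j\<in>J - {j}. ?f j)" using prod.remove[OF fJ j(1)] .
  also have "\<dots> = t * (\<Prod>j\<in>J - {j}. ?f j)" using j by simp
  finally have eq: "(\<Prod>j\<in>J. ?f j) = t * (\<Prod>j\<in>J - {j}. ?f j)" .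
  have 0: "0 \<le> (\<Prod>j\<in>J - {j}. ?f j)" by (rule prod_nonneg) (use t in auto)
  have 1: "(\<Prod>j\<in>J - {j}. ?f j) \<le> 1" by (rule prod_le_1) (use t in auto)
  have "t * (\<Prod>j\<in>J - {j}. ?f j) \<le> t * 1" by (rule mult_left_mono[OF 1 t(1)])
  thus ?thesis unfolding eq using 0 t by (simp add: abs_mult)
qed

lemma poly_sign:
  fixes c :: "nat set \<Rightarrow> real"
  assumes fin: "finite JJ" and cardJ: "\<And>J. J \<in> JJ \<Longrightarrow> card J = n \<and> finite J"
  shows "(\<forall>d. (\<forall>j. 0 < d j) \<longrightarrow> (\<Sum>J\<in>JJ. c J * (\<Prod>j\<in>J. d j)) \<noteq> 0) \<longleftrightarrow>
    ((\<forall>J\<in>JJ. \<forall>K\<in>JJ. c J \<noteq> 0 \<and> c K \<noteq> 0 \<longrightarrow> sgn (c J) = sgn (c K)) \<and> (\<exists>J\<in>JJ. c J \<noteq> 0))"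
    (is "?L \<longleftrightarrow> ?R")
proof
  assume R: ?R
  then obtain J1 where J1: "J1 \<in> JJ" "c J1 \<noteq> 0" by auto
  let ?s = "sgn (c J1)"
  show ?L
  proof (intro allI impI)
    fix d :: "nat \<Rightarrow> real" assume d: "\<forall>j. 0 < d j"
    have pp: "0 < (\<Prod>j\<in>J. d j)" for J using d by (simp add: prod_pos)
    have trm: "0 \<le> ?s * (c J * (\<Prod>j\<in>J. d j))" if J: "J \<in> JJ" for J
    proof (cases "c J = 0")
      case False
      hence "?s = sgn (c J)" using R J J1 by metis
      hence "?s * c J = \<bar>c J\<bar>" by (simp add: abs_sgn)
      hence "?s * (c J * (\<Prod>j\<in>J. d j)) = \<bar>c J\<bar> * (\<Prod>j\<in>J. d j)" by (metis mult.assoc)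
      thus ?thesis using pp[of J] by (metis abs_ge_zero less_imp_le mult_nonneg_nonneg)
    qed simp
    have "0 < ?s * (c J1 * (\<Prod>j\<in>J1. d j))"
    proof -
      have "?s * c J1 = \<bar>c J1\<bar>" by (simp add: abs_sgn)
      hence "?s * (c J1 * (\<Prod>j\<in>J1. d j)) = \<bar>c J1\<bar> * (\<Prod>j\<in>J1. d j)" by (metis mult.assoc)
      thus ?thesis using pp[of J1] J1 by (metis zero_less_abs_iff mult_pos_pos)
    qed
    also have "\<dots> \<le> (\<Sum>J\<in>JJ. ?s * (c J * (\<Prod>j\<in>J. d j)))"
      by (rule member_le_sum[OF J1(1)]) (use trm fin in auto)
    also have "\<dots> = ?s * (\<Sum>J\<in>JJ. c J * (\<Prod>j\<in>J. d j))" by (simp add: sum_distrib_left)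
    finally show "(\<Sum>J\<in>JJ. c J * (\<Prod>j\<in>J. d j)) \<noteq> 0" by auto
  qed
next
  assume L: ?L
  define Q where "Q = (\<lambda>d. (\<Sum>J\<in>JJ. c J * (\<Prod>j\<in>J. d j)))"
  have Q1: "Q (\<lambda>_. 1) = (\<Sum>J\<in>JJ. c J)" unfolding Q_def by simp
  have Qnz: "Q (\<lambda>_. 1) \<noteq> 0" using spec[OF L, of "\<lambda>_. 1"] unfolding Q_def by simp
  have ex: "\<exists>J\<in>JJ. c J \<noteq> 0"
  proof (rule ccontr)
    assume "\<not> ?thesis" hence "(\<Sum>J\<in>JJ. c J) = 0" by auto
    thus False using Qnz Q1 by simp
  qed
  have sg: "sgn (c J0) = sgn (Q (\<lambda>_. 1))" if J0: "J0 \<in> JJ" "c J0 \<noteq> 0" for J0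
  proof -
    define phi where "phi = (\<lambda>t::real. Q (\<lambda>j. if j \<in> J0 then 1 else t))"
    define M where "M = (\<Sum>J\<in>JJ. \<bar>c J\<bar>)"
    have M0: "0 \<le> M" unfolding M_def by (rule sum_nonneg) auto
    have phi_pos: "phi t \<noteq> 0" if "0 < t" for t
      unfolding phi_def Q_def using L that by auto
    have phi1: "phi 1 = Q (\<lambda>_. 1)" unfolding phi_def by simp
    have close: "\<bar>phi t - c J0\<bar> \<le> t * M" if t: "0 \<le> t" "t \<le> 1" for t
    proof -
      let ?f = "\<lambda>J. c J * (\<Prod>j\<in>J. (if j \<in> J0 then 1 else t))"
      have "phi t = ?f J0 + (\<Sum>J\<in>JJ - {J0}. ?f J)"
        unfolding phi_def Q_def using sum.remove[OF fin J0(1), of ?f] by simp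
      moreover have "?f J0 = c J0" by simp
      ultimately have "phi t - c J0 = (\<Sum>J\<in>JJ - {J0}. ?f J)" by simp
      hence "\<bar>phi t - c J0\<bar> \<le> (\<Sum>J\<in>JJ - {J0}. \<bar>?f J\<bar>)" by (simp add: sum_abs)
      also have "\<dots> \<le> (\<Sum>J\<in>JJ - {J0}. \<bar>c J\<bar> * t)"
      proof (rule sum_mono)
        fix J assume J: "J \<in> JJ - {J0}"
        have "\<bar>\<Prod>j\<in>J. (if j \<in> J0 then 1 else t)\<bar> \<le> t"
          by (rule prod_le_t[OF t]) (use J cardJ J0 in auto)
        thus "\<bar>?f J\<bar> \<le> \<bar>c J\<bar> * t" by (simp add: abs_mult mult_left_mono)
      qed
      also have "\<dots> \<le> (\<Sum>J\<in>JJ. \<bar>c J\<bar> * t)"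
        by (rule sum_mono2[OF fin]) (use t in auto)
      also have "\<dots> = t * M" unfolding M_def by (simp add: sum_distrib_left mult.commute)
      finally show ?thesis .
    qed
    define t0 where "t0 = min 1 (\<bar>c J0\<bar> / (2 * (M + 1)))"
    have t0: "0 < t0" "t0 \<le> 1" unfolding t0_def using J0 M0 by auto
    have "t0 * M < \<bar>c J0\<bar>"
    proof -
      have "t0 * M \<le> (\<bar>c J0\<bar> / (2 * (M + 1))) * M" unfolding t0_def
        by (rule mult_right_mono) (use M0 in auto)
      also have "\<dots> < \<bar>c J0\<bar>" using J0 M0 by (simp add: field_simps add_nonneg_pos)
      finally show ?thesis .
    qed
    hence "\<bar>phi t0 - c J0\<bar> < \<bar>c J0\<bar>" using close[of t0] t0 by simp
    hence s0: "sgn (phi t0) = sgn (c J0)" by (rule sgn_close)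
    have cont: "continuous_on {t0..1} phi"
    proof -
      have cj: "continuous_on {t0..1} (\<lambda>t::real. if j \<in> J0 then 1 else t)" for j
        by (cases "j \<in> J0") (auto intro: continuous_intros)
      show ?thesis unfolding phi_def Q_def
        by (intro continuous_intros cj)
    qed
    show ?thesis
    proof (rule ccontr)
      assume ne: "sgn (c J0) \<noteq> sgn (Q (\<lambda>_. 1))"
      have n0: "phi t0 \<noteq> 0" using phi_pos t0 by auto
      have n1: "phi 1 \<noteq> 0" using phi_pos by auto
      have "phi t0 < 0 \<and> 0 < phi 1 \<or> phi 1 < 0 \<and> 0 < phi t0"
        using ne s0 phi1 n0 n1 by (auto simp: sgn_if split: if_splits)
      then obtain x where x: "t0 \<le> x" "x \<le> 1" "phi x = 0"
        using IVT'[of phi t0 0 1] IVT2'[of phi 1 0 t0] cont t0 by force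
      thus False using phi_pos t0 by auto
    qed
  qed
  show ?R using sg ex by metis
qed


lemma sign_vec_dim[simp]: "dim_vec (sign_vec x) = dim_vec x" unfolding sign_vec_def by simp
lemma sign_vec_index[simp]: "i < dim_vec x \<Longrightarrow> sign_vec x $ i = sgn (x $ i)" unfolding sign_vec_def by simp

lemma sign_vec_zero_iff: "sign_vec x = 0\<^sub>v r \<longleftrightarrow> x = 0\<^sub>v r"
proof
  assume a: "sign_vec x = 0\<^sub>v r"
  hence d: "dim_vec x = r" by (metis index_zero_vec(2) sign_vec_dim)
  show "x = 0\<^sub>v r"
  proof (rule eq_vecI)
    fix i assume "i < dim_vec (0\<^sub>v r)"
    hence i: "i < r" by simp
    have "sgn (x $ i) = 0" using a i d by (metis index_zero_vec(1) sign_vec_index)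
    thus "x $ i = 0\<^sub>v r $ i" using i by (simp add: sgn_0_0)
  qed (use d in simp)
next
  assume "x = 0\<^sub>v r" thus "sign_vec x = 0\<^sub>v r" by (intro eq_vecI) auto
qed

lemma (in vec_space) full_rank_inj:
  assumes B: "B \<in> carrier_mat n nc" and rk: "rank B = nc"
    and z: "z \<in> carrier_vec nc" and Bz: "B *\<^sub>v z = 0\<^sub>v n"
  shows "z = 0\<^sub>v nc"
proof (rule ccontr)
  assume nz: "z \<noteq> 0\<^sub>v nc"
  show False
  proof (cases "distinct (cols B)")
    case True
    then have "lin_indpt (set (cols B))" using full_rank_lin_indpt[OF B rk] by auto
    then show False using lin_depI[OF B z nz Bz True] by blast
  next
    case False
    obtain S where S: "maximal S (\<lambda>T. T \<subseteq> set (cols B) \<and> lin_indpt T)"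
      using maximal_exists[of "(\<lambda>T. T \<subseteq> set (cols B) \<and> lin_indpt T)" "card (set (cols B))" "{}"]
      by (meson List.finite_set card_mono empty_iff empty_subsetI finite_lin_indpt2 rev_finite_subset)
    then have "card S \<le> card (set (cols B))" by (simp add: card_mono maximal_def)
    moreover have "card (set (cols B)) < nc"
      using B False card_distinct cols_length card_length carrier_matD(2) nat_less_le by metis
    ultimately have "card S < nc" by simp
    then show False using rank_card_indpt[OF B S] rk by simp
  qed
qed

lemma ker_im_to_det:
  assumes A: "A \<in> carrier_mat n r" and B: "B \<in> carrier_mat r n"
    and inter: "sign_vec ` mat_kernel A \<inter> sign_vec ` mat_image B = {0\<^sub>v r}"
    and inj: "\<And>z. z \<in> carrier_vec n \<Longrightarrow> B *\<^sub>v z = 0\<^sub>v r \<Longrightarrow> z = 0\<^sub>v n"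
    and d: "\<forall>j. 0 < d j"
  shows "det (scl A d * B) \<noteq> 0"
proof
  assume "det (scl A d * B) = 0"
  moreover have M: "scl A d * B \<in> carrier_mat n n" using mult_carrier_mat[OF scl_carrier[OF A] B] by auto
  ultimately obtain z where z: "z \<in> carrier_vec n" "z \<noteq> 0\<^sub>v n" "(scl A d * B) *\<^sub>v z = 0\<^sub>v n"
    using det_0_iff_vec_prod_zero[OF M] by blast
  define y where "y = B *\<^sub>v z"
  have y: "y \<in> carrier_vec r" unfolding y_def using B z(1) by auto
  define x where "x = vec r (\<lambda>j. d j * y $ j)"
  have "A *\<^sub>v x = scl A d *\<^sub>v y" unfolding x_def using scl_mult_vec[OF A y] by simp
  also have "\<dots> = (scl A d * B) *\<^sub>v z" unfolding y_def
    using assoc_mult_mat_vec[OF scl_carrier[OF A] B z(1)] by simp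
  finally have "A *\<^sub>v x = 0\<^sub>v n" using z(3) by simp
  hence xk: "x \<in> mat_kernel A" using A by (intro mat_kernelI[OF A]) (auto simp: x_def)
  have yim: "y \<in> mat_image B" unfolding mat_image_def y_def using B z by auto
  have "sign_vec x = sign_vec y"
    by (rule eq_vecI, insert y d, auto simp: x_def sgn_mult)
  hence "sign_vec y \<in> sign_vec ` mat_kernel A \<inter> sign_vec ` mat_image B" using xk yim by (metis IntI image_eqI)
  hence "y = 0\<^sub>v r" using inter sign_vec_zero_iff by auto
  hence "z = 0\<^sub>v n" using inj z(1) unfolding y_def by auto
  thus False using z(2) by simp
qed

lemma det_to_ker_im:
  assumes A: "A \<in> carrier_mat n r" and B: "B \<in> carrier_mat r n"
    and dets: "\<forall>d. (\<forall>j. 0 < d j) \<longrightarrow> det (scl A d * B) \<noteq> 0"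
  shows "sign_vec ` mat_kernel A \<inter> sign_vec ` mat_image B = {0\<^sub>v r}"
proof
  show "{0\<^sub>v r} \<subseteq> sign_vec ` mat_kernel A \<inter> sign_vec ` mat_image B"
  proof -
    have "0\<^sub>v r \<in> mat_kernel A" using A by (intro mat_kernelI[OF A]) auto
    moreover have "0\<^sub>v r \<in> mat_image B" unfolding mat_image_def using B
      by (auto intro!: exI[of _ "0\<^sub>v n"])
    moreover have "sign_vec (0\<^sub>v r) = 0\<^sub>v r" using sign_vec_zero_iff by blast
    ultimately show ?thesis by (metis IntI empty_subsetI image_eqI insert_subset)
  qed
  show "sign_vec ` mat_kernel A \<inter> sign_vec ` mat_image B \<subseteq> {0\<^sub>v r}"
  proof
    fix s assume "s \<in> sign_vec ` mat_kernel A \<inter> sign_vec ` mat_image B"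
    then obtain x y where xk: "x \<in> mat_kernel A" and yim: "y \<in> mat_image B"
      and sx: "s = sign_vec x" and sy: "s = sign_vec y" by auto
    from yim obtain z where z: "z \<in> carrier_vec n" and yz: "y = B *\<^sub>v z"
      unfolding mat_image_def using B by auto
    have x: "x \<in> carrier_vec r" and Ax: "A *\<^sub>v x = 0\<^sub>v n" using mat_kernelD[OF A xk] by auto
    have y: "y \<in> carrier_vec r" using yz B z by auto
    have sg: "sgn (x $ j) = sgn (y $ j)" if "j < r" for j
      using arg_cong[OF trans[OF sx[symmetric] sy], of "\<lambda>v. v $ j"] that x y by auto
    show "s \<in> {0\<^sub>v r}"
    proof (rule ccontr)
      assume "s \<notin> {0\<^sub>v r}"
      hence yne: "y \<noteq> 0\<^sub>v r" using sy sign_vec_zero_iff by auto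
      define d where "d = (\<lambda>j. if j < r \<and> y $ j \<noteq> 0 then x $ j / y $ j else 1)"
      have dpos: "\<forall>j. 0 < d j"
      proof
        fix j show "0 < d j"
        proof (cases "j < r \<and> y $ j \<noteq> 0")
          case True
          hence "sgn (x $ j) = sgn (y $ j)" using sg by auto
          hence "0 < x $ j / y $ j" using True by (auto simp: sgn_if zero_less_divide_iff split: if_splits)
          thus ?thesis using True unfolding d_def by simp
        qed (auto simp: d_def)
      qed
      have xd: "vec r (\<lambda>j. d j * y $ j) = x"
      proof (rule eq_vecI)
        fix j assume "j < dim_vec x"
        hence j: "j < r" using x by auto
        show "vec r (\<lambda>j. d j * y $ j) $ j = x $ j"
        proof (cases "y $ j = 0")
          case True
          hence "x $ j = 0" using sg[OF j] by (simp add: sgn_0_0)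
          thus ?thesis using True j by simp
        qed (use j in \<open>auto simp: d_def\<close>)
      qed (use x in auto)
      have "(scl A d * B) *\<^sub>v z = A *\<^sub>v x"
        by (subst assoc_mult_mat_vec[OF scl_carrier[OF A] B z],
            subst scl_mult_vec[OF A], use B z yz xd in auto)
      hence "(scl A d * B) *\<^sub>v z = 0\<^sub>v n" using Ax by simp
      moreover have "z \<noteq> 0\<^sub>v n" using yne yz B by auto
      moreover have M: "scl A d * B \<in> carrier_mat n n" using mult_carrier_mat[OF scl_carrier[OF A] B] by auto
      ultimately have "det (scl A d * B) = 0" using det_0_iff_vec_prod_zero[OF M] z by blast
      thus False using dets dpos by auto
    qed
  qed
qed

theorem mainTheorem15:
  fixes A B :: "real mat" and n r :: nat
  assumes "A \<in> carrier_mat n r" and "B \<in> carrier_mat r n"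
    and "vec_space.rank n A = n" and "vec_space.rank r B = n"
  shows "(sign_vec ` mat_kernel A \<inter> sign_vec ` mat_image B = {0\<^sub>v r}) \<longleftrightarrow>
    ((\<forall>J K. J \<subseteq> {0..<r} \<and> card J = n \<and> K \<subseteq> {0..<r} \<and> card K = n \<and>
        minor_prod n A B J \<noteq> 0 \<and> minor_prod n A B K \<noteq> 0 \<longrightarrow>
        sgn (minor_prod n A B J) = sgn (minor_prod n A B K)) \<and>
     (\<exists>J. J \<subseteq> {0..<r} \<and> card J = n \<and> minor_prod n A B J \<noteq> 0))"
proof -
  note A = assms(1) and B = assms(2)
  let ?JJ = "{J. J \<subseteq> {0..<r} \<and> card J = n}"
  have inj: "\<And>z. z \<in> carrier_vec n \<Longrightarrow> B *\<^sub>v z = 0\<^sub>v r \<Longrightarrow> z = 0\<^sub>v n"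
    using vec_space.full_rank_inj[OF B assms(4)] by blast
  have fin: "finite ?JJ" by (rule finite_subset[of _ "Pow {0..<r}"]) auto
  have cJ: "\<And>J. J \<in> ?JJ \<Longrightarrow> card J = n \<and> finite J" using finite_subset by blast
  have "(sign_vec ` mat_kernel A \<inter> sign_vec ` mat_image B = {0\<^sub>v r}) \<longleftrightarrow>
        (\<forall>d. (\<forall>j. 0 < d j) \<longrightarrow> det (scl A d * B) \<noteq> 0)"
  proof
    assume "sign_vec ` mat_kernel A \<inter> sign_vec ` mat_image B = {0\<^sub>v r}"
    from ker_im_to_det[OF A B this inj]
    show "\<forall>d. (\<forall>j. 0 < d j) \<longrightarrow> det (scl A d * B) \<noteq> 0" by blast
  next
    assume "\<forall>d. (\<forall>j. 0 < d j) \<longrightarrow> det (scl A d * B) \<noteq> 0"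
    from det_to_ker_im[OF A B this]
    show "sign_vec ` mat_kernel A \<inter> sign_vec ` mat_image B = {0\<^sub>v r}" .
  qed
  also have "\<dots> \<longleftrightarrow> (\<forall>d. (\<forall>j. 0 < d j) \<longrightarrow>
      (\<Sum>J\<in>?JJ. minor_prod n A B J * (\<Prod>j\<in>J. d j)) \<noteq> 0)"
    unfolding P_formula[OF A B] ..
  also have "\<dots> \<longleftrightarrow> ((\<forall>J\<in>?JJ. \<forall>K\<in>?JJ. minor_prod n A B J \<noteq> 0 \<and> minor_prod n A B K \<noteq> 0 \<longrightarrow>
       sgn (minor_prod n A B J) = sgn (minor_prod n A B K)) \<and> (\<exists>J\<in>?JJ. minor_prod n A B J \<noteq> 0))"
    by (rule poly_sign[OF fin cJ])
  also have "\<dots> \<longleftrightarrow> ((\<forall>J K. J \<subseteq> {0..<r} \<and> card J = n \<and> K \<subseteq> {0..<r} \<and> card K = n \<and>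
        minor_prod n A B J \<noteq> 0 \<and> minor_prod n A B K \<noteq> 0 \<longrightarrow>
        sgn (minor_prod n A B J) = sgn (minor_prod n A B K)) \<and>
     (\<exists>J. J \<subseteq> {0..<r} \<and> card J = n \<and> minor_prod n A B J \<noteq> 0))" by auto
  finally show ?thesis .
qed

end
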